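(* Let $V$ be a vertex operator algebra, $W_1,W_2,W_3$ weak $V$-modules and ${\mathcal Y}$ a quasi-intertwining operator of type $\binom{W_3}{W_1\,W_2}$. Then ${\mathcal Y}(w_{(1)},x)\in\mathcal H(W_2,W_3)$ for every $w_{(1)}\in W_1$, and the linear map $\psi_x:W_1\to\mathcal H(W_2,W_3)$, $\psi_x(w_{(1)})={\mathcal Y}(w_{(1)},x)$, is a $g(V)_{\ge0}$-homomorphism: $\psi_x(v_nw_{(1)})=v_n\psi_x(w_{(1)})$ for all $v\in V$, $n\ge0$, $w_{(1)}\in W_1$, where $v_n$ acts on $\mathcal H(W_2,W_3)$ via $Y_{\mathcal H}$.
   Context: A weak $V$-module is a module for $V$ regarded as a vertex algebra; $L(-1)=\omega_0$. A quasi-intertwining operator of type $\binom{W_3}{W_1\,W_2}$ is a linear map $W_1\otimes W_2\to W_3\{x\}$, $w_{(1)}\otimes w_{(2)}\mapsto{\mathcal Y}(w_{(1)},x)w_{(2)}=\sum_{n\in\mathbb C}(w_{(1)})_nw_{(2)}x^{-n-1}$, with $(w_{(1)})_nw_{(2)}=0$ for $\mathrm{Re}\,n\gg0$, the commutator formula $Y_3(v,x_1){\mathcal Y}(w_{(1)},x_2)w_{(2)}-{\mathcal Y}(w_{(1)},x_2)Y_2(v,x_1)w_{(2)}=\mathrm{Res}_{x_0}x_2^{-1}\delta(\frac{x_1-x_0}{x_2}){\mathcal Y}(Y_1(v,x_0)w_{(1)},x_2)w_{(2)}$, and $\frac{d}{dx}{\mathcal Y}(w_{(1)},x)={\mathcal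 Y}(L(-1)w_{(1)},x)$. $\mathcal H(W_2,W_3)$ is the space of $\phi(x)\in(\mathrm{Hom}(W_2,W_3))\{x\}$ such that: for each $w_{(2)}$, writing $\phi(x)w_{(2)}=\sum_{n\in\mathbb C}w^{(n)}x^{-n-1}$, $w^{(n)}=0$ for $\mathrm{Re}\,n\gg0$; $[L(-1),\phi(x)]=\frac{d}{dx}\phi(x)$; and for each $v\in V$ there is $k\ge0$ with $(x_1-x_2)^k(Y_3(v,x_1)\phi(x_2)-\phi(x_2)Y_2(v,x_1))=0$. The map $Y_{\mathcal H}(v,x_0)\phi(x)=\mathrm{Res}_{x_1}\big(x_0^{-1}\delta(\frac{x_1-x}{x_0})Y_3(v,x_1)\phi(x)-x_0^{-1}\delta(\frac{x-x_1}{-x_0})\phi(x)Y_2(v,x_1)\big)=\sum_nv_n\phi(x)x_0^{-n-1}$ makes $\mathcal H(W_2,W_3)$ a weak $V$-module; for $n\ge0$, $v_n\phi(x)=\mathrm{Res}_{x_1}(x_1-x)^n[Y_3(v,x_1)\phi(x)-\phi(x)Y_2(v,x_1)]$. *)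

theory Defs
  imports Complex_Main "HOL-Library.Groups_Big_Fun"
begin

class complex_vector = ab_group_add +
  fixes scaleC :: "complex \<Rightarrow> 'a \<Rightarrow> 'a"  (infixr \<open>*\<^sub>C\<close> 75)
  assumes scaleC_add_right: "a *\<^sub>C (x + y) = a *\<^sub>C x + a *\<^sub>C y"
    and scaleC_add_left: "(a + b) *\<^sub>C x = a *\<^sub>C x + b *\<^sub>C x"
    and scaleC_scaleC: "a *\<^sub>C (b *\<^sub>C x) = (a * b) *\<^sub>C x"
    and scaleC_one: "1 *\<^sub>C x = x"

text \<open>A vertex operator Y(v,x) = sum_n v_n x^(-n-1) is encoded by its modes:
  Y v n u = v_n u (n :: int).  A formal series with complex exponents
  sum_{n in C} a_n x^(-n-1) is encoded by its coefficient function n :: complex => a_n.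
  Finite sums over i >= 0 (finite because of truncation) are written with Sum_any.\<close>

definition clin :: "('a::complex_vector \<Rightarrow> 'b::complex_vector) \<Rightarrow> bool" where
  "clin f \<longleftrightarrow> (\<forall>x y. f (x + y) = f x + f y) \<and> (\<forall>c x. f (c *\<^sub>C x) = c *\<^sub>C f x)"

text \<open>Component form of the Jacobi identity for a representation YW of (V,Y):
  the coefficient of x0^(-l-1) x1^(-m-1) x2^(-n-1) of
  x0^-1 delta((x1-x2)/x0) YW(u,x1)YW(v,x2) - x0^-1 delta((x2-x1)/(-x0)) YW(v,x2)YW(u,x1)
   = x2^-1 delta((x1-x0)/x2) YW(Y(u,x0)v,x2).\<close>
definition jacobi ::
  "('v::complex_vector \<Rightarrow> int \<Rightarrow> 'v \<Rightarrow> 'v) \<Rightarrow> ('v \<Rightarrow> int \<Rightarrow> 'w::complex_vector \<Rightarrow> 'w) \<Rightarrow> bool" where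
  "jacobi Y YW \<longleftrightarrow> (\<forall>u v w l m n.
     Sum_any (\<lambda>i::nat. ((-1)^i * (of_int l gchoose i)) *\<^sub>C
        (YW u (l + m - int i) (YW v (n + int i) w)
         - (-1)^(nat \<bar>l\<bar>) *\<^sub>C YW v (l + n - int i) (YW u (m + int i) w)))
     = Sum_any (\<lambda>i::nat. (of_int m gchoose i) *\<^sub>C YW (Y u (l + int i) v) (m + n - int i) w))"

definition Lop :: "('v \<Rightarrow> int \<Rightarrow> 'w \<Rightarrow> 'w) \<Rightarrow> 'v \<Rightarrow> int \<Rightarrow> 'w \<Rightarrow> 'w" where
  "Lop YW om n = YW om (n + 1)"

definition wt_space :: "('v::complex_vector \<Rightarrow> int \<Rightarrow> 'v \<Rightarrow> 'v) \<Rightarrow> 'v \<Rightarrow> int \<Rightarrow> 'v set" where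
  "wt_space Y om n = {v. Lop Y om 0 v = of_int n *\<^sub>C v}"

definition is_VOA ::
  "('v::complex_vector \<Rightarrow> int \<Rightarrow> 'v \<Rightarrow> 'v) \<Rightarrow> 'v \<Rightarrow> 'v \<Rightarrow> complex \<Rightarrow> bool" where
  "is_VOA Y vac om c \<longleftrightarrow>
     \<comment> \<open>grading V = direct sum of V_(n), V_(n) the L(0)-eigenspaces\<close>
     (\<forall>v. \<exists>N f. finite N \<and> (\<forall>n\<in>N. f n \<in> wt_space Y om n) \<and> v = (\<Sum>n\<in>N. f n)) \<and>
     (\<forall>n. \<exists>B. finite B \<and> B \<subseteq> wt_space Y om n \<and>
            (\<forall>v\<in>wt_space Y om n. \<exists>a. v = (\<Sum>b\<in>B. a b *\<^sub>C b))) \<and>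
     (\<exists>N. \<forall>n<N. wt_space Y om n = {0}) \<and>
     \<comment> \<open>linearity\<close>
     (\<forall>u n. clin (Y u n)) \<and> (\<forall>n v. clin (\<lambda>u. Y u n v)) \<and>
     \<comment> \<open>truncation\<close>
     (\<forall>u v. \<exists>N. \<forall>n\<ge>N. Y u n v = 0) \<and>
     \<comment> \<open>vacuum and creation properties\<close>
     (\<forall>n v. Y vac n v = (if n = -1 then v else 0)) \<and>
     (\<forall>v n. n \<ge> 0 \<longrightarrow> Y v n vac = 0) \<and> (\<forall>v. Y v (-1) vac = v) \<and>
     \<comment> \<open>Jacobi identity\<close>
     jacobi Y Y \<and>
     \<comment> \<open>Virasoro relations\<close>
     (\<forall>m n v. Lop Y om m (Lop Y om n v) - Lop Y om n (Lop Y om m v)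
        = of_int (m - n) *\<^sub>C Lop Y om (m + n) v
          + (if m + n = 0 then ((of_int m ^ 3 - of_int m) / 12 * c) *\<^sub>C v else 0)) \<and>
     \<comment> \<open>omega has weight 2\<close>
     om \<in> wt_space Y om 2 \<and>
     \<comment> \<open>L(-1)-derivative property: Y(L(-1)v,x) = d/dx Y(v,x)\<close>
     (\<forall>v n u. Y (Lop Y om (-1) v) n u = (- of_int n) *\<^sub>C Y v (n - 1) u)"

definition weak_module ::
  "('v::complex_vector \<Rightarrow> int \<Rightarrow> 'v \<Rightarrow> 'v) \<Rightarrow> 'v \<Rightarrow> ('v \<Rightarrow> int \<Rightarrow> 'w::complex_vector \<Rightarrow> 'w) \<Rightarrow> bool" where
  "weak_module Y vac YW \<longleftrightarrow>
     (\<forall>v n. clin (YW v n)) \<and> (\<forall>n w. clin (\<lambda>v. YW v n w)) \<and>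
     (\<forall>v w. \<exists>N. \<forall>n\<ge>N. YW v n w = 0) \<and>
     (\<forall>n w. YW vac n w = (if n = -1 then w else 0)) \<and>
     jacobi Y YW"

text \<open>Quasi-intertwining operator of type (W3 / W1 W2): I w1 n w2 = (w1)_n w2, n complex.\<close>
definition quasi_intertwining ::
  "'v \<Rightarrow> ('v \<Rightarrow> int \<Rightarrow> 'w1 \<Rightarrow> 'w1) \<Rightarrow> ('v \<Rightarrow> int \<Rightarrow> 'w2 \<Rightarrow> 'w2) \<Rightarrow> ('v \<Rightarrow> int \<Rightarrow> 'w3 \<Rightarrow> 'w3)
   \<Rightarrow> ('w1::complex_vector \<Rightarrow> complex \<Rightarrow> 'w2::complex_vector \<Rightarrow> 'w3::complex_vector) \<Rightarrow> bool" where
  "quasi_intertwining om Y1 Y2 Y3 I \<longleftrightarrow>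
     (\<forall>w1 n. clin (I w1 n)) \<and> (\<forall>n w2. clin (\<lambda>w1. I w1 n w2)) \<and>
     (\<forall>w1 w2. \<exists>R::real. \<forall>n. Re n > R \<longrightarrow> I w1 n w2 = 0) \<and>
     \<comment> \<open>commutator formula, coefficient of x1^(-m-1) x2^(-n-1)\<close>
     (\<forall>v w1 w2 (m::int) (n::complex).
        Y3 v m (I w1 n w2) - I w1 n (Y2 v m w2)
        = Sum_any (\<lambda>i::nat. (of_int m gchoose i) *\<^sub>C
              I (Y1 v (int i) w1) (of_int m + n - of_nat i) w2)) \<and>
     \<comment> \<open>L(-1)-derivative property, L(-1) = omega_0 on W1\<close>
     (\<forall>w1 n w2. I (Y1 om 0 w1) n w2 = (- n) *\<^sub>C I w1 (n - 1) w2)"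

definition in_H ::
  "'v \<Rightarrow> ('v \<Rightarrow> int \<Rightarrow> 'w2 \<Rightarrow> 'w2) \<Rightarrow> ('v \<Rightarrow> int \<Rightarrow> 'w3 \<Rightarrow> 'w3)
   \<Rightarrow> (complex \<Rightarrow> 'w2::complex_vector \<Rightarrow> 'w3::complex_vector) \<Rightarrow> bool" where
  "in_H om Y2 Y3 phi \<longleftrightarrow>
     (\<forall>n. clin (phi n)) \<and>
     (\<forall>w2. \<exists>R::real. \<forall>n. Re n > R \<longrightarrow> phi n w2 = 0) \<and>
     \<comment> \<open>[L(-1), phi(x)] = d/dx phi(x)\<close>
     (\<forall>n w2. Y3 om 0 (phi n w2) - phi n (Y2 om 0 w2) = (- n) *\<^sub>C phi (n - 1) w2) \<and>
     \<comment> \<open>(x1-x2)^k (Y3(v,x1) phi(x2) - phi(x2) Y2(v,x1)) = 0, coefficientwise\<close>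
     (\<forall>v. \<exists>k::nat. \<forall>(m::int) (n::complex) w2.
        (\<Sum>j\<le>k. ((-1)^j * of_nat (k choose j)) *\<^sub>C
            (Y3 v (m + int k - int j) (phi (n + of_nat j) w2)
             - phi (n + of_nat j) (Y2 v (m + int k - int j) w2))) = 0)"

text \<open>Y_H(v,x0) phi(x) = sum_n v_n phi(x) x0^(-n-1):
  Res_x1 (x0^-1 delta((x1-x)/x0) Y3(v,x1) phi(x) - x0^-1 delta((x-x1)/(-x0)) phi(x) Y2(v,x1)).
  Coefficient of x^(-p-1) of v_n phi(x), applied to w2.\<close>
definition YH ::
  "('v \<Rightarrow> int \<Rightarrow> 'w2 \<Rightarrow> 'w2) \<Rightarrow> ('v \<Rightarrow> int \<Rightarrow> 'w3 \<Rightarrow> 'w3) \<Rightarrow> 'v \<Rightarrow> int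
   \<Rightarrow> (complex \<Rightarrow> 'w2::complex_vector \<Rightarrow> 'w3::complex_vector) \<Rightarrow> complex \<Rightarrow> 'w2 \<Rightarrow> 'w3" where
  "YH Y2 Y3 v n phi p w2 =
     Sum_any (\<lambda>j::nat. ((-1)^j * (of_int n gchoose j)) *\<^sub>C Y3 v (n - int j) (phi (p + of_nat j) w2))
   - Sum_any (\<lambda>j::nat. ((-1)^(nat \<bar>n - int j\<bar>) * (of_int n gchoose j)) *\<^sub>C
        phi (p + of_int n - of_nat j) (Y2 v (int j) w2))"

end

theory Submission
  imports Defs
begin

lemma scaleC_zero_right[simp]: "a *\<^sub>C (0::'a::complex_vector) = 0"
proof -
  have "a *\<^sub>C (0::'a) = a *\<^sub>C 0 + a *\<^sub>C 0" by (metis add.right_neutral scaleC_add_right)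
  then show ?thesis by simp
qed

lemma scaleC_zero_left[simp]: "(0::complex) *\<^sub>C (x::'a::complex_vector) = 0"
proof -
  have "(0::complex) *\<^sub>C x = 0 *\<^sub>C x + 0 *\<^sub>C x" by (metis add.right_neutral scaleC_add_left)
  then show ?thesis by simp
qed

lemma scaleC_minus_right: "a *\<^sub>C ((x::'a::complex_vector) - y) = a *\<^sub>C x - a *\<^sub>C y"
  by (metis add_diff_cancel diff_add_cancel scaleC_add_right)

lemma scaleC_sum_right: "a *\<^sub>C (\<Sum>i\<in>A. f i) = (\<Sum>i\<in>A. a *\<^sub>C (f i::'a::complex_vector))"
  by (induction A rule: infinite_finite_induct) (simp_all add: scaleC_add_right)

lemma scaleC_sum_left: "(\<Sum>i\<in>A. f i) *\<^sub>C (x::'a::complex_vector) = (\<Sum>i\<in>A. f i *\<^sub>C x)"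
  by (induction A rule: infinite_finite_induct) (simp_all add: scaleC_add_left)

lemma sum_scale_swap:
  assumes "finite J" "finite A"
  shows "(\<Sum>j\<in>J. c j *\<^sub>C (\<Sum>i\<in>A. d j i *\<^sub>C (X i::'a::complex_vector)))
       = (\<Sum>i\<in>A. (\<Sum>j\<in>J. c j * d j i) *\<^sub>C X i)"
  by (simp add: scaleC_sum_right scaleC_sum_left scaleC_scaleC sum.swap[of _ J A])

lemma clin_zero: "clin f \<Longrightarrow> f 0 = 0"
  unfolding clin_def by (metis add_cancel_right_right add_0)

lemma clin_diff: "clin f \<Longrightarrow> f (x - y) = f x - f y"
  unfolding clin_def by (metis add_diff_cancel diff_add_cancel)

definition Dk :: "nat \<Rightarrow> (complex \<Rightarrow> complex) \<Rightarrow> complex \<Rightarrow> complex" where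
  "Dk k f x = (\<Sum>j\<le>k. ((-1)^j * of_nat (k choose j)) * f (x - of_nat j))"

lemma Dk_Suc: "Dk (Suc k) f x = Dk k (\<lambda>y. f y - f (y - 1)) x"
proof -
  have "Dk (Suc k) f x = f x + (\<Sum>i\<le>k. ((-1)^Suc i * (of_nat (k choose i) + of_nat (k choose Suc i))) * f (x - of_nat (Suc i)))"
    unfolding Dk_def by (subst sum.atMost_Suc_shift) simp
  also have "\<dots> = f x + (\<Sum>i\<le>k. ((-1)^Suc i * of_nat (k choose Suc i)) * f (x - of_nat (Suc i)))
     + (\<Sum>i\<le>k. ((-1)^Suc i * of_nat (k choose i)) * f (x - of_nat (Suc i)))"
    unfolding add.assoc sum.distrib[symmetric] by (simp add: algebra_simps)
  also have "f x + (\<Sum>i\<le>k. ((-1)^Suc i * of_nat (k choose Suc i)) * f (x - of_nat (Suc i)))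
     = (\<Sum>i\<le>Suc k. ((-1)^i * of_nat (k choose i)) * f (x - of_nat i))"
    by (simp only: sum.atMost_Suc_shift[of _ k]) simp
  also have "\<dots> = Dk k f x" unfolding Dk_def by simp
  also have "(\<Sum>i\<le>k. ((-1)^Suc i * of_nat (k choose i)) * f (x - of_nat (Suc i))) = - Dk k f (x - 1)"
    unfolding Dk_def by (simp add: sum_negf[symmetric] algebra_simps)
  finally have "Dk (Suc k) f x = Dk k f x - Dk k f (x - 1)" by simp
  also have "\<dots> = Dk k (\<lambda>y. f y - f (y - 1)) x"
    unfolding Dk_def by (simp add: sum_subtractf[symmetric] algebra_simps)
  finally show ?thesis .
qed

lemma Dk_zero: "Dk k (\<lambda>y. 0) x = 0" unfolding Dk_def by simp

lemma Dk_gchoose: "i < k \<Longrightarrow> Dk k (\<lambda>y. y gchoose i) x = 0"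
proof (induction k arbitrary: i x)
  case 0 then show ?case by simp
next
  case (Suc k)
  show ?case
  proof (cases i)
    case 0 then show ?thesis by (simp add: Dk_Suc Dk_zero)
  next
    case (Suc i')
    have e: "\<And>y::complex. (y gchoose Suc i') - ((y - 1) gchoose Suc i') = (y - 1) gchoose i'"
    proof -
      fix y :: complex
      have "((y - 1) + 1) gchoose Suc i' = ((y - 1) gchoose i') + ((y - 1) gchoose Suc i')"
        by (rule gbinomial_Suc_Suc)
      then show "(y gchoose Suc i') - ((y - 1) gchoose Suc i') = (y - 1) gchoose i'" by simp
    qed
    have "Dk (Suc k) (\<lambda>y. y gchoose i) x = Dk k (\<lambda>y. (y - 1) gchoose i') x"
      by (simp add: Dk_Suc Suc e)
    also have "\<dots> = Dk k (\<lambda>y. y gchoose i') (x - 1)"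
      unfolding Dk_def by (simp add: algebra_simps)
    also have "\<dots> = 0" using Suc.IH[of i'] Suc.prems \<open>i = Suc i'\<close> by simp
    finally show ?thesis .
  qed
qed

lemma sum_rev_atMost: "(\<Sum>j\<le>(N::nat). g j) = (\<Sum>j\<le>N. g (N - j))"
  by (rule sum.reindex_bij_witness[where i="\<lambda>i. N - i" and j="\<lambda>i. N - i"]) auto


lemma loc_lemma:
  fixes I :: "'w1::complex_vector \<Rightarrow> complex \<Rightarrow> 'w2::complex_vector \<Rightarrow> 'w3::complex_vector"
  assumes QI: "quasi_intertwining om Y1 Y2 Y3 I"
    and lin0: "\<And>n w2. I 0 n w2 = 0"
    and trunc: "\<And>i. i \<ge> k \<Longrightarrow> Y1 v (int i) w1 = 0"
  shows "(\<Sum>j\<le>k. ((-1)^j * of_nat (k choose j)) *\<^sub>C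
            (Y3 v (m + int k - int j) (I w1 (n + of_nat j) w2)
             - I w1 (n + of_nat j) (Y2 v (m + int k - int j) w2))) = 0"
proof -
  have comm: "\<And>v w1 w2 (m::int) n. Y3 v m (I w1 n w2) - I w1 n (Y2 v m w2) = Sum_any (\<lambda>i::nat. (of_int m gchoose i) *\<^sub>C
              I (Y1 v (int i) w1) (of_int m + n - of_nat i) w2)" using QI unfolding quasi_intertwining_def by blast
  define X where "X i = I (Y1 v (int i) w1) (of_int m + of_nat k + n - of_nat i) w2" for i
  have step: "Y3 v (m + int k - int j) (I w1 (n + of_nat j) w2) - I w1 (n + of_nat j) (Y2 v (m + int k - int j) w2)
      = (\<Sum>i<k. ((of_int m + of_nat k - of_nat j) gchoose i) *\<^sub>C X i)" for j
  proof -
    have "Y3 v (m + int k - int j) (I w1 (n + of_nat j) w2) - I w1 (n + of_nat j) (Y2 v (m + int k - int j) w2)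
      = Sum_any (\<lambda>i::nat. (of_int (m + int k - int j) gchoose i) *\<^sub>C
              I (Y1 v (int i) w1) (of_int (m + int k - int j) + (n + of_nat j) - of_nat i) w2)"
      by (rule comm)
    also have "\<dots> = (\<Sum>i<k. (of_int (m + int k - int j) gchoose i) *\<^sub>C
              I (Y1 v (int i) w1) (of_int (m + int k - int j) + (n + of_nat j) - of_nat i) w2)"
    proof (rule Sum_any.expand_superset)
      show "finite {..<k}" by simp
      show "{a. (of_int (m + int k - int j) gchoose a) *\<^sub>C
              I (Y1 v (int a) w1) (of_int (m + int k - int j) + (n + of_nat j) - of_nat a) w2 \<noteq> 0} \<subseteq> {..<k}"
      proof -
        have "(of_int (m + int k - int j) gchoose a) *\<^sub>C
              I (Y1 v (int a) w1) (of_int (m + int k - int j) + (n + of_nat j) - of_nat a) w2 = 0"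
          if "\<not> a < k" for a using that trunc lin0 by (simp add: not_less)
        then show ?thesis by blast
      qed
    qed
    also have "\<dots> = (\<Sum>i<k. ((of_int m + of_nat k - of_nat j) gchoose i) *\<^sub>C X i)"
      by (rule sum.cong) (simp_all add: X_def algebra_simps)
    finally show ?thesis .
  qed
  have "(\<Sum>j\<le>k. ((-1)^j * of_nat (k choose j)) *\<^sub>C
            (Y3 v (m + int k - int j) (I w1 (n + of_nat j) w2)
             - I w1 (n + of_nat j) (Y2 v (m + int k - int j) w2)))
     = (\<Sum>j\<le>k. ((-1)^j * of_nat (k choose j)) *\<^sub>C (\<Sum>i<k. ((of_int m + of_nat k - of_nat j) gchoose i) *\<^sub>C X i))"
    by (simp add: step)
  also have "\<dots> = (\<Sum>i<k. (\<Sum>j\<le>k. ((-1)^j * of_nat (k choose j)) * ((of_int m + of_nat k - of_nat j) gchoose i)) *\<^sub>C X i)"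
    by (rule sum_scale_swap) simp_all
  also have "\<dots> = (\<Sum>i<k. (0::complex) *\<^sub>C X i)"
  proof (rule sum.cong)
    fix i assume "i \<in> {..<k}"
    then have "Dk k (\<lambda>y. y gchoose i) (of_int m + of_nat k) = 0" by (intro Dk_gchoose) simp
    then show "(\<Sum>j\<le>k. ((-1)^j * of_nat (k choose j)) * ((of_int m + of_nat k - of_nat j) gchoose i)) *\<^sub>C X i
       = (0::complex) *\<^sub>C X i" unfolding Dk_def by simp
  qed simp
  also have "\<dots> = 0" by simp
  finally show ?thesis .
qed

lemma hom_lemma:
  fixes I :: "'w1::complex_vector \<Rightarrow> complex \<Rightarrow> 'w2::complex_vector \<Rightarrow> 'w3::complex_vector"
  assumes QI: "quasi_intertwining om Y1 Y2 Y3 I"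
  shows "I (Y1 v (int N) w1) p w2 = YH Y2 Y3 v (int N) (I w1) p w2"
proof -
  have comm: "\<And>v w1 w2 (m::int) n. Y3 v m (I w1 n w2) - I w1 n (Y2 v m w2) = Sum_any (\<lambda>i::nat. (of_int m gchoose i) *\<^sub>C
              I (Y1 v (int i) w1) (of_int m + n - of_nat i) w2)" using QI unfolding quasi_intertwining_def by blast
  define X where "X i = I (Y1 v (int i) w1) (of_nat N + p - of_nat i) w2" for i
  define c where "c j = ((-1)^j * of_nat (N choose j) :: complex)" for j
  have step: "Y3 v (int N - int j) (I w1 (p + of_nat j) w2) - I w1 (p + of_nat j) (Y2 v (int N - int j) w2)
      = (\<Sum>i\<le>N. ((of_nat N - of_nat j) gchoose i) *\<^sub>C X i)" if "j \<le> N" for j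
  proof -
    have "Y3 v (int N - int j) (I w1 (p + of_nat j) w2) - I w1 (p + of_nat j) (Y2 v (int N - int j) w2)
      = Sum_any (\<lambda>i::nat. (of_int (int N - int j) gchoose i) *\<^sub>C
              I (Y1 v (int i) w1) (of_int (int N - int j) + (p + of_nat j) - of_nat i) w2)"
      by (rule comm)
    also have "\<dots> = (\<Sum>i\<le>N. (of_int (int N - int j) gchoose i) *\<^sub>C
              I (Y1 v (int i) w1) (of_int (int N - int j) + (p + of_nat j) - of_nat i) w2)"
    proof (rule Sum_any.expand_superset)
      show "finite {..N}" by simp
      have "(of_int (int N - int j) gchoose a) = (0::complex)" if "a > N" for a
      proof -
        have "(of_int (int N - int j) :: complex) = of_nat (N - j)" using \<open>j \<le> N\<close> by (simp add: of_nat_diff)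
        then show ?thesis using that binomial_gbinomial[of "N - j" a, where 'a=complex]
          by (simp add: binomial_eq_0)
      qed
      then show "{a. (of_int (int N - int j) gchoose a) *\<^sub>C
              I (Y1 v (int a) w1) (of_int (int N - int j) + (p + of_nat j) - of_nat a) w2 \<noteq> 0} \<subseteq> {..N}"
        by (metis (mono_tags, lifting) atMost_iff mem_Collect_eq not_le scaleC_zero_left subsetI)
    qed
    also have "\<dots> = (\<Sum>i\<le>N. ((of_nat N - of_nat j) gchoose i) *\<^sub>C X i)"
      by (rule sum.cong) (simp_all add: X_def algebra_simps)
    finally show ?thesis .
  qed
  have S1: "Sum_any (\<lambda>j::nat. ((-1)^j * (of_int (int N) gchoose j)) *\<^sub>C Y3 v (int N - int j) (I w1 (p + of_nat j) w2))
     = (\<Sum>j\<le>N. c j *\<^sub>C Y3 v (int N - int j) (I w1 (p + of_nat j) w2))"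
  proof -
    have "Sum_any (\<lambda>j::nat. ((-1)^j * (of_int (int N) gchoose j)) *\<^sub>C Y3 v (int N - int j) (I w1 (p + of_nat j) w2))
      = (\<Sum>j\<le>N. ((-1)^j * (of_int (int N) gchoose j)) *\<^sub>C Y3 v (int N - int j) (I w1 (p + of_nat j) w2))"
      apply (rule Sum_any.expand_superset, simp)
      apply (rule subsetI, rule ccontr)
      apply (simp add: not_le binomial_gbinomial[symmetric] binomial_eq_0)
      done
    then show ?thesis by (simp add: c_def binomial_gbinomial)
  qed
  have S2: "Sum_any (\<lambda>j::nat. ((-1)^(nat \<bar>int N - int j\<bar>) * (of_int (int N) gchoose j)) *\<^sub>C
        I w1 (p + of_int (int N) - of_nat j) (Y2 v (int j) w2))
     = (\<Sum>j\<le>N. c j *\<^sub>C I w1 (p + of_nat j) (Y2 v (int N - int j) w2))"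
  proof -
    have "Sum_any (\<lambda>j::nat. ((-1)^(nat \<bar>int N - int j\<bar>) * (of_int (int N) gchoose j)) *\<^sub>C
        I w1 (p + of_int (int N) - of_nat j) (Y2 v (int j) w2))
      = (\<Sum>j\<le>N. ((-1)^(nat \<bar>int N - int j\<bar>) * (of_int (int N) gchoose j)) *\<^sub>C
        I w1 (p + of_int (int N) - of_nat j) (Y2 v (int j) w2))"
      apply (rule Sum_any.expand_superset, simp)
      apply (rule subsetI, rule ccontr)
      apply (simp add: not_le binomial_gbinomial[symmetric] binomial_eq_0)
      done
    also have "\<dots> = (\<Sum>j\<le>N. ((-1)^(nat \<bar>int N - int (N - j)\<bar>) * (of_int (int N) gchoose (N - j))) *\<^sub>C
        I w1 (p + of_int (int N) - of_nat (N - j)) (Y2 v (int (N - j)) w2))"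
      by (rule sum_rev_atMost)
    also have "\<dots> = (\<Sum>j\<le>N. c j *\<^sub>C I w1 (p + of_nat j) (Y2 v (int N - int j) w2))"
    proof (rule sum.cong)
      fix j assume "j \<in> {..N}"
      then have j: "j \<le> N" by simp
      have a: "nat \<bar>int N - int (N - j)\<bar> = j" using j by simp
      have b: "(of_int (int N) gchoose (N - j)) = (of_nat (N choose j) :: complex)"
        using j by (simp add: binomial_gbinomial[symmetric] binomial_symmetric[symmetric])
      have d: "p + of_int (int N) - of_nat (N - j) = p + of_nat j" using j by (simp add: of_nat_diff)
      have e: "int (N - j) = int N - int j" using j by simp
      show "((-1)^(nat \<bar>int N - int (N - j)\<bar>) * (of_int (int N) gchoose (N - j))) *\<^sub>C
        I w1 (p + of_int (int N) - of_nat (N - j)) (Y2 v (int (N - j)) w2) =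
        c j *\<^sub>C I w1 (p + of_nat j) (Y2 v (int N - int j) w2)"
        unfolding a b d e c_def by simp
    qed simp
    finally show ?thesis .
  qed
  have "YH Y2 Y3 v (int N) (I w1) p w2
     = (\<Sum>j\<le>N. c j *\<^sub>C (Y3 v (int N - int j) (I w1 (p + of_nat j) w2) - I w1 (p + of_nat j) (Y2 v (int N - int j) w2)))"
    unfolding YH_def S1 S2 by (simp add: scaleC_minus_right sum_subtractf)
  also have "\<dots> = (\<Sum>j\<le>N. c j *\<^sub>C (\<Sum>i\<le>N. ((of_nat N - of_nat j) gchoose i) *\<^sub>C X i))"
    by (rule sum.cong) (simp_all add: step)
  also have "\<dots> = (\<Sum>i\<le>N. (\<Sum>j\<le>N. c j * ((of_nat N - of_nat j) gchoose i)) *\<^sub>C X i)"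
    by (rule sum_scale_swap) simp_all
  also have "\<dots> = (\<Sum>i\<le>N. (if i = N then 1 else 0) *\<^sub>C X i)"
  proof (rule sum.cong)
    fix i assume "i \<in> {..N}"
    then have i: "i \<le> N" by simp
    show "(\<Sum>j\<le>N. c j * ((of_nat N - of_nat j) gchoose i)) *\<^sub>C X i = (if i = N then 1 else 0) *\<^sub>C X i"
    proof (cases "i = N")
      case True
      have z: "((of_nat N - (1 + of_nat j)) gchoose N) = (0::complex)" if "j < N" for j
      proof -
        have "(of_nat N - (1 + of_nat j) :: complex) = of_nat (N - Suc j)" using that by (simp add: of_nat_diff)
        then show ?thesis using that binomial_gbinomial[of "N - Suc j" N, where 'a=complex]
          by (simp add: binomial_eq_0)
      qed
      have "(\<Sum>j\<le>N. c j * ((of_nat N - of_nat j) gchoose i)) = 1"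
        unfolding True sum.atMost_shift using binomial_gbinomial[of N N, where 'a=complex] by (simp add: z c_def)
      then show ?thesis using True by simp
    next
      case False
      then have "i < N" using i by simp
      then have "Dk N (\<lambda>y. y gchoose i) (of_nat N) = 0" by (rule Dk_gchoose)
      then show ?thesis using False unfolding Dk_def c_def by simp
    qed
  qed simp
  also have "\<dots> = (\<Sum>i\<le>N. if i = N then X i else 0)"
    by (rule sum.cong) (simp_all add: scaleC_one)
  also have "\<dots> = X N"
    by (simp add: sum.delta)
  also have "\<dots> = I (Y1 v (int N) w1) p w2" by (simp add: X_def)
  finally show ?thesis by simp
qed

theorem mainTheorem13:
  fixes Y :: "'v::complex_vector \<Rightarrow> int \<Rightarrow> 'v \<Rightarrow> 'v" and vac om :: 'v and c :: complex
    and Y1 :: "'v \<Rightarrow> int \<Rightarrow> 'w1::complex_vector \<Rightarrow> 'w1"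
    and Y2 :: "'v \<Rightarrow> int \<Rightarrow> 'w2::complex_vector \<Rightarrow> 'w2"
    and Y3 :: "'v \<Rightarrow> int \<Rightarrow> 'w3::complex_vector \<Rightarrow> 'w3"
    and I :: "'w1 \<Rightarrow> complex \<Rightarrow> 'w2 \<Rightarrow> 'w3"
  assumes "is_VOA Y vac om c"
    and "weak_module Y vac Y1" and "weak_module Y vac Y2" and "weak_module Y vac Y3"
    and "quasi_intertwining om Y1 Y2 Y3 I"
  shows "(\<forall>w1. in_H om Y2 Y3 (I w1))
       \<and> (\<forall>a w w' p w2. I (a *\<^sub>C w + w') p w2 = a *\<^sub>C I w p w2 + I w' p w2)
       \<and> (\<forall>v (n::int) w1. n \<ge> 0 \<longrightarrow> I (Y1 v n w1) = YH Y2 Y3 v n (I w1))"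
proof -
  note Q = assms(5)[unfolded quasi_intertwining_def]
  have lin1: "\<And>w1 n. clin (I w1 n)" using Q by blast
  have lin2: "\<And>n w2. clin (\<lambda>w1. I w1 n w2)" using Q by blast
  have tr: "\<And>w1 w2. \<exists>R::real. \<forall>n. Re n > R \<longrightarrow> I w1 n w2 = 0" using Q by blast
  have comm: "\<And>v w1 w2 (m::int) n. Y3 v m (I w1 n w2) - I w1 n (Y2 v m w2) = Sum_any (\<lambda>i::nat. (of_int m gchoose i) *\<^sub>C
              I (Y1 v (int i) w1) (of_int m + n - of_nat i) w2)" using Q by blast
  have der: "\<And>w1 n w2. I (Y1 om 0 w1) n w2 = (- n) *\<^sub>C I w1 (n - 1) w2" using Q by blast
  have lin0: "\<And>n w2. I 0 n w2 = 0" using lin2 clin_zero by metis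
  have tr1: "\<And>v w. \<exists>N. \<forall>n\<ge>N. Y1 v n w = 0" using assms(2) unfolding weak_module_def by blast
  have P1: "in_H om Y2 Y3 (I w1)" for w1
    unfolding in_H_def
  proof (intro conjI allI)
    show "\<And>n. clin (I w1 n)" by (rule lin1)
    show "\<And>w2. \<exists>R::real. \<forall>n. Re n > R \<longrightarrow> I w1 n w2 = 0" by (rule tr)
    fix n w2
    have "Y3 om 0 (I w1 n w2) - I w1 n (Y2 om 0 w2) = Sum_any (\<lambda>i::nat. (of_int 0 gchoose i) *\<^sub>C
              I (Y1 om (int i) w1) (of_int 0 + n - of_nat i) w2)" by (rule comm)
    also have "\<dots> = (\<Sum>i\<in>{0}. (of_int 0 gchoose i) *\<^sub>C
              I (Y1 om (int i) w1) (of_int 0 + n - of_nat i) w2)"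
      apply (rule Sum_any.expand_superset, simp)
      apply (rule subsetI, rule ccontr)
      apply (auto simp: gbinomial_0_left)
      done
    also have "\<dots> = (- n) *\<^sub>C I w1 (n - 1) w2" by (simp add: der scaleC_one)
    finally show "Y3 om 0 (I w1 n w2) - I w1 n (Y2 om 0 w2) = (- n) *\<^sub>C I w1 (n - 1) w2" .
  next
    fix v
    obtain N where N: "\<forall>n\<ge>N. Y1 v n w1 = 0" using tr1[of v w1] by (elim exE)
    have trv: "\<And>i. i \<ge> nat N \<Longrightarrow> Y1 v (int i) w1 = 0" using N by simp
    show "\<exists>k::nat. \<forall>(m::int) (n::complex) w2.
        (\<Sum>j\<le>k. ((-1)^j * of_nat (k choose j)) *\<^sub>C
            (Y3 v (m + int k - int j) (I w1 (n + of_nat j) w2)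
             - I w1 (n + of_nat j) (Y2 v (m + int k - int j) w2))) = 0"
    proof (intro exI allI)
      fix m :: int and n :: complex and w2
      show "(\<Sum>j\<le>nat N. ((-1)^j * of_nat (nat N choose j)) *\<^sub>C
            (Y3 v (m + int (nat N) - int j) (I w1 (n + of_nat j) w2)
             - I w1 (n + of_nat j) (Y2 v (m + int (nat N) - int j) w2))) = 0"
        by (rule loc_lemma[OF assms(5) lin0 trv])
    qed
  qed
  have P2: "I (a *\<^sub>C w + w') p w2 = a *\<^sub>C I w p w2 + I w' p w2" for a w w' p w2
    using lin2[of p w2] unfolding clin_def by simp
  have P3: "I (Y1 v n w1) = YH Y2 Y3 v n (I w1)" if "n \<ge> 0" for v n w1
  proof -
    define N where "N = nat n"
    have "n = int N" using that unfolding N_def by simp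
    show ?thesis unfolding \<open>n = int N\<close>
      by (intro ext) (rule hom_lemma[OF assms(5)])
  qed
  show ?thesis using P1 P2 P3 by blast
qed

end
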